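(* Let $G$ be a global type. The language of the LTS $\mathrm{cat}(G)$ coincides with the language of the LTS on global types, with initial state $G$, whose transitions are those derivable using only the rules [Choice] and [Rec].
   Context: Fix disjoint sets $\mathfrak{P}$ (participants) and $\mathcal{M}$ (messages); interactions are $\mathsf{p}\to\mathsf{q}:\mathsf{m}$ with $\mathsf{p}\neq\mathsf{q}\in\mathfrak{P}$, $\mathsf{m}\in\mathcal{M}$, forming the set $\mathcal{L}_{int}$; $\mathrm{ptp}(\mathsf{p}\to\mathsf{q}:\mathsf{m})=\{\mathsf{p},\mathsf{q}\}$. Global types: $G ::= \mathbf{end} \mid \mu\mathbf{r}.G \mid \mathbf{r} \mid \sum_{i\in I}\mathsf{p}\to\mathsf{q}_i:\mathsf{m}_i;G_i$ (written $\mathsf{p}\to\mathsf{q}:\mathsf{m};G$ when $|I|=1$); $\mu\mathbf{r}$ binds $\mathbf{r}$, occurrences of recursion variables are guarded, and bound variable names are all distinct and distinct from free ones. Operational semantics (LTS with labels in $\mathcal{L}_{int}$): [Choice] $\sum_{i\in I}\mathsf{p}\to\mathsf{q}_i:\mathsf{m}_i;G_i\xrightarrow{\mathsf{p}\to\mathsf{q}_j:\mathsf{m}_j}G_j$ for $j\in I$; [Rec] if $G[\mu\mathbf{r}.G/\mathbf{r}]\xrightarrow{\alpha}G'$ then $\mu\mathbf{r}.G\xrightarrow{\alpha}G'$; [Pass] if $G_j\xrightarrow{\alpha}G'_j$ and $\mathsf{p},\mathsf{q}_j\notin\mathrm{ptp}(\alpha)$ for all $j\in I$, then $\sum_{i\in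 I}\mathsf{p}\to\mathsf{q}_i:\mathsf{m}_i;G_i\xrightarrow{\alpha}\sum_{i\in I}\mathsf{p}\to\mathsf{q}_i:\mathsf{m}_i;G'_i$. $\mathrm{cat}(G)$ is the LTS with the subterms of $G$ as states, initial state $G$, labels $\mathcal{L}_{int}$, and transitions $\mathrm{catr}(G)$, where $\mathrm{catr}(\mathbf{end})=\mathrm{catr}(\mathbf{r})=\emptyset$, $\mathrm{catr}(\mu\mathbf{r}.G)=\mathrm{catr}(G)\cup\{\mathbf{r}\xrightarrow{\varepsilon}\mu\mathbf{r}.G,\ \mu\mathbf{r}.G\xrightarrow{\varepsilon}G\}$, and $\mathrm{catr}(\sum_{i\in I}\mathsf{p}\to\mathsf{q}_i:\mathsf{m}_i;G_i)=\bigcup_{j\in I}(\{\sum_{i\in I}\mathsf{p}\to\mathsf{q}_i:\mathsf{m}_i;G_i\xrightarrow{\mathsf{p}\to\mathsf{q}_j:\mathsf{m}_j}G_j\}\cup\mathrm{catr}(G_j))$. The language of an LTS is the set of traces (concatenations of labels, $\varepsilon$ being the identity) of its finite or infinite runs from the initial state. *)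

theory Defs
  imports Main
begin

text \<open>Participants have type 'p, messages type 'm, recursion variables type 'v.
  A branching \<open>\<Sum>\<^sub>i\<^sub>\<in>\<^sub>I p\<rightarrow>q\<^sub>i:m\<^sub>i;G\<^sub>i\<close> is represented as \<open>Choice p bs\<close> where bs is the
  (finite) list of the branches (q_i, m_i, G_i).\<close>

datatype ('p, 'm, 'v) gty =
    End
  | Rec 'v "('p, 'm, 'v) gty"
  | Var 'v
  | Choice 'p "('p \<times> 'm \<times> ('p, 'm, 'v) gty) list"

text \<open>Interactions \<open>p \<rightarrow> q : m\<close> are triples (p, q, m).\<close>
type_synonym ('p, 'm) interaction = "'p \<times> 'p \<times> 'm"

fun ptp :: "('p, 'm) interaction \<Rightarrow> 'p set" where
  "ptp (p, q, m) = {p, q}"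

fun fv :: "('p, 'm, 'v) gty \<Rightarrow> 'v set" where
  "fv End = {}"
| "fv (Var r) = {r}"
| "fv (Rec r G) = fv G - {r}"
| "fv (Choice p bs) = (\<Union>b \<in> set bs. fv (snd (snd b)))"

fun bvs :: "('p, 'm, 'v) gty \<Rightarrow> 'v list" where
  "bvs End = []"
| "bvs (Var r) = []"
| "bvs (Rec r G) = r # bvs G"
| "bvs (Choice p bs) = concat (map (\<lambda>b. bvs (snd (snd b))) bs)"

fun unguarded :: "('p, 'm, 'v) gty \<Rightarrow> 'v set" where
  "unguarded End = {}"
| "unguarded (Var r) = {r}"
| "unguarded (Rec r G) = unguarded G - {r}"
| "unguarded (Choice p bs) = {}"

fun guarded_ok :: "('p, 'm, 'v) gty \<Rightarrow> bool" where
  "guarded_ok End = True"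
| "guarded_ok (Var r) = True"
| "guarded_ok (Rec r G) = (r \<notin> unguarded G \<and> guarded_ok G)"
| "guarded_ok (Choice p bs) = (\<forall>b \<in> set bs. p \<noteq> fst b \<and> guarded_ok (snd (snd b)))"

definition wf_gty :: "('p, 'm, 'v) gty \<Rightarrow> bool" where
  "wf_gty G \<longleftrightarrow> guarded_ok G \<and> distinct (bvs G) \<and> set (bvs G) \<inter> fv G = {}"

text \<open>\<open>subst G r N\<close> is \<open>G[N/r]\<close>. Under the variable convention of the paper no capture
  arises, so substitution simply stops at a binder of the same name.\<close>
fun subst :: "('p, 'm, 'v) gty \<Rightarrow> 'v \<Rightarrow> ('p, 'm, 'v) gty \<Rightarrow> ('p, 'm, 'v) gty" where
  "subst End r N = End"
| "subst (Var s) r N = (if s = r then N else Var s)"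
| "subst (Rec s G) r N = (if s = r then Rec s G else Rec s (subst G r N))"
| "subst (Choice p bs) r N = Choice p (map (\<lambda>(q, m, G). (q, m, subst G r N)) bs)"

text \<open>An LTS is (states, initial state, transitions); labels are \<open>'l option\<close>, where
  None is the silent label \<open>\<epsilon>\<close>.\<close>
type_synonym ('s, 'l) lts = "'s set \<times> 's \<times> ('s \<times> 'l option \<times> 's) set"

datatype 'a word = Fin "'a list" | Inf "nat \<Rightarrow> 'a"

inductive fin_run :: "'s set \<Rightarrow> ('s \<times> 'l option \<times> 's) set \<Rightarrow> 's \<Rightarrow> 'l option list \<Rightarrow> bool"
  for S T where
  nil: "s \<in> S \<Longrightarrow> fin_run S T s []"
| step: "s \<in> S \<Longrightarrow> (s, a, s') \<in> T \<Longrightarrow> fin_run S T s' ls \<Longrightarrow> fin_run S T s (a # ls)"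

fun erase :: "'l option list \<Rightarrow> 'l list" where
  "erase [] = []"
| "erase (None # ls) = erase ls"
| "erase (Some a # ls) = a # erase ls"

definition inf_run :: "'s set \<Rightarrow> ('s \<times> 'l option \<times> 's) set \<Rightarrow> 's \<Rightarrow> (nat \<Rightarrow> 's) \<Rightarrow> (nat \<Rightarrow> 'l option) \<Rightarrow> bool" where
  "inf_run S T s0 st l \<longleftrightarrow> st 0 = s0 \<and> (\<forall>i. st i \<in> S \<and> (st i, l i, st (Suc i)) \<in> T)"

definition inf_trace :: "(nat \<Rightarrow> 'l option) \<Rightarrow> 'l word \<Rightarrow> bool" where
  "inf_trace l w \<longleftrightarrow>
     (\<exists>ws n. w = Fin ws \<and> (\<forall>i\<ge>n. l i = None) \<and> ws = erase (map l [0..<n]))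
   \<or> (\<exists>f. w = Inf f \<and> (\<exists>e. strict_mono e \<and> range e = {i. l i \<noteq> None} \<and> (\<forall>k. l (e k) = Some (f k))))"

definition lang :: "('s, 'l) lts \<Rightarrow> 'l word set" where
  "lang A = (case A of (S, s0, T) \<Rightarrow>
      {Fin (erase ls) | ls. fin_run S T s0 ls}
    \<union> {w. \<exists>st l. inf_run S T s0 st l \<and> inf_trace l w})"

inductive step_CR :: "('p, 'm, 'v) gty \<Rightarrow> ('p, 'm) interaction \<Rightarrow> ('p, 'm, 'v) gty \<Rightarrow> bool" where
  Choice: "(q, m, G') \<in> set bs \<Longrightarrow> step_CR (Choice p bs) (p, q, m) G'"
| Rec: "step_CR (subst G r (Rec r G)) \<alpha> G' \<Longrightarrow> step_CR (Rec r G) \<alpha> G'"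

definition lts_CR :: "('p, 'm, 'v) gty \<Rightarrow> (('p, 'm, 'v) gty, ('p, 'm) interaction) lts" where
  "lts_CR G = (UNIV, G, {(G1, Some \<alpha>, G2) | G1 \<alpha> G2. step_CR G1 \<alpha> G2})"

fun subterms :: "('p, 'm, 'v) gty \<Rightarrow> ('p, 'm, 'v) gty set" where
  "subterms End = {End}"
| "subterms (Var r) = {Var r}"
| "subterms (Rec r G) = insert (Rec r G) (subterms G)"
| "subterms (Choice p bs) = insert (Choice p bs) (\<Union>b \<in> set bs. subterms (snd (snd b)))"

fun catr :: "('p, 'm, 'v) gty \<Rightarrow> (('p, 'm, 'v) gty \<times> ('p, 'm) interaction option \<times> ('p, 'm, 'v) gty) set" where
  "catr End = {}"
| "catr (Var r) = {}"
| "catr (Rec r G) = catr G \<union> {(Var r, None, Rec r G), (Rec r G, None, G)}"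
| "catr (Choice p bs) =
     (\<Union>b \<in> set bs. {(Choice p bs, Some (p, fst b, fst (snd b)), snd (snd b))} \<union> catr (snd (snd b)))"

definition cat :: "('p, 'm, 'v) gty \<Rightarrow> (('p, 'm, 'v) gty, ('p, 'm) interaction) lts" where
  "cat G = (subterms G, G, catr G)"

end

theory Submission
  imports Defs
begin

fun ssubst :: "('v \<Rightarrow> ('p, 'm, 'v) gty) \<Rightarrow> ('p, 'm, 'v) gty \<Rightarrow> ('p, 'm, 'v) gty" where
  "ssubst \<sigma> End = End"
| "ssubst \<sigma> (Var s) = \<sigma> s"
| "ssubst \<sigma> (Rec s G) = Rec s (ssubst (\<sigma>(s := Var s)) G)"
| "ssubst \<sigma> (Choice p bs) = Choice p (map (\<lambda>(q, m, G). (q, m, ssubst \<sigma> G)) bs)"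

lemma ssubst_Var: "ssubst Var X = X"
proof (induction X rule: bvs.induct)
  case (4 p bs)
  then show ?case by (auto intro!: map_idI)
qed auto

lemma snd_snd_case[simp]: "snd (snd ((\<lambda>(q, m, G). (q, m, f G)) b)) = f (snd (snd b))"
  by (cases b) auto

lemma fv_ssubst: "fv (ssubst \<sigma> X) \<subseteq> (\<Union>x\<in>fv X. fv (\<sigma> x))"
proof (induction X arbitrary: \<sigma> rule: bvs.induct)
  case (3 r G)
  show ?case
  proof
    fix y assume "y \<in> fv (ssubst \<sigma> (Rec r G))"
    then have y: "y \<in> fv (ssubst (\<sigma>(r := Var r)) G)" "y \<noteq> r" by auto
    then obtain x where x: "x \<in> fv G" "y \<in> fv ((\<sigma>(r := Var r)) x)" using 3[of "\<sigma>(r := Var r)"] by blast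
    then have "x \<noteq> r" using y(2) by auto
    then show "y \<in> (\<Union>x\<in>fv (Rec r G). fv (\<sigma> x))" using x by auto
  qed
next
  case (4 p bs)
  show ?case
  proof
    fix y assume "y \<in> fv (ssubst \<sigma> (Choice p bs))"
    then obtain b where b: "b \<in> set bs" "y \<in> fv (ssubst \<sigma> (snd (snd b)))" by auto
    from 4[OF b(1), of \<sigma>] b(2) obtain x where x: "x \<in> fv (snd (snd b))" "y \<in> fv (\<sigma> x)" by blast
    have "x \<in> fv (Choice p bs)" using x(1) b(1) by auto
    then show "y \<in> (\<Union>x\<in>fv (Choice p bs). fv (\<sigma> x))" using x(2) by blast
  qed
qed auto

lemma subst_nofv: "r \<notin> fv T \<Longrightarrow> subst T r N = T"
proof (induction T rule: bvs.induct)
  case (4 p bs)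
  then show ?case by (auto intro!: map_idI)
qed auto

lemma subst_ssubst:
  "r \<notin> set (bvs B) \<Longrightarrow> (\<forall>x\<in>fv B - {r}. r \<notin> fv (\<sigma> x)) \<Longrightarrow>
   subst (ssubst (\<sigma>(r := Var r)) B) r N = ssubst (\<sigma>(r := N)) B"
proof (induction B arbitrary: \<sigma> rule: bvs.induct)
  case (2 s)
  then show ?case by (auto simp: subst_nofv)
next
  case (3 s B)
  then have sr: "s \<noteq> r" by auto
  have e1: "\<sigma>(r := Var r, s := Var s) = \<sigma>(s := Var s, r := Var r)" by (rule fun_upd_twist) (use sr in simp)
  have e2: "\<sigma>(r := N, s := Var s) = \<sigma>(s := Var s, r := N)" by (rule fun_upd_twist) (use sr in simp)
  have "subst (ssubst (\<sigma>(s := Var s, r := Var r)) B) r N = ssubst ((\<sigma>(s := Var s))(r := N)) B"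
  proof (rule 3(1))
    show "r \<notin> set (bvs B)" using 3(2) by simp
    show "\<forall>x\<in>fv B - {r}. r \<notin> fv ((\<sigma>(s := Var s)) x)" using 3(3) sr by auto
  qed
  then show ?case using sr by (simp only: ssubst.simps subst.simps e1 e2 if_False sr simp_thms)
next
  case (4 p bs)
  have h: "subst (ssubst (\<sigma>(r := Var r)) (snd (snd b))) r N = ssubst (\<sigma>(r := N)) (snd (snd b))"
    if b: "b \<in> set bs" for b
  proof (rule 4(1)[OF b])
    show "r \<notin> set (bvs (snd (snd b)))" using 4(2) b by auto
    show "\<forall>x\<in>fv (snd (snd b)) - {r}. r \<notin> fv (\<sigma> x)" using 4(3) b by auto
  qed
  have "map (\<lambda>(q, m, G). (q, m, subst G r N)) (map (\<lambda>(q, m, G). (q, m, ssubst (\<sigma>(r := Var r)) G)) bs)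
      = map (\<lambda>(q, m, G). (q, m, ssubst (\<sigma>(r := N)) G)) bs"
    unfolding map_map by (rule map_cong) (auto simp: split_beta h)
  then show ?case by (simp only: ssubst.simps subst.simps)
qed auto

lemma step_Rec_iff: "step_CR (Rec r B) \<alpha> Z \<longleftrightarrow> step_CR (subst B r (Rec r B)) \<alpha> Z"
proof
  assume "step_CR (Rec r B) \<alpha> Z"
  then show "step_CR (subst B r (Rec r B)) \<alpha> Z" by (cases rule: step_CR.cases) auto
next
  assume "step_CR (subst B r (Rec r B)) \<alpha> Z"
  then show "step_CR (Rec r B) \<alpha> Z" by (rule step_CR.Rec)
qed

lemma subterms_refl: "X \<in> subterms X"
  by (cases X) auto

lemma subterms_trans: "Y \<in> subterms X \<Longrightarrow> Z \<in> subterms Y \<Longrightarrow> Z \<in> subterms X"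
proof (induction X rule: bvs.induct)
  case (4 p bs)
  show ?case
  proof (cases "Y = Choice p bs")
    case True with 4 show ?thesis by simp
  next
    case False
    with 4(2) obtain b where b: "b \<in> set bs" "Y \<in> subterms (snd (snd b))" by auto
    then have "Z \<in> subterms (snd (snd b))" using 4(1)[OF b] 4(3) by simp
    then show ?thesis using b(1) by auto
  qed
qed auto

lemma subterms_bvs: "Rec r B \<in> subterms T \<Longrightarrow> r \<in> set (bvs T)"
proof (induction T rule: bvs.induct)
  case (4 p bs)
  then obtain b where "b \<in> set bs" "Rec r B \<in> subterms (snd (snd b))" by auto
  with 4 show ?case by force
qed auto

lemma subterms_distinct: "X \<in> subterms T \<Longrightarrow> distinct (bvs T) \<Longrightarrow> distinct (bvs X)"
proof (induction T rule: bvs.induct)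
  case (4 p bs)
  show ?case
  proof (cases "X = Choice p bs")
    case True with 4 show ?thesis by simp
  next
    case False
    with 4(2) obtain b where b: "b \<in> set bs" "X \<in> subterms (snd (snd b))" by auto
    have "distinct (bvs (snd (snd b)))" using 4(3) b(1) by (auto simp: distinct_concat_iff)
    then show ?thesis using 4(1)[OF b(1) b(2)] by simp
  qed
qed auto

lemma distinct_concat_map_same:
  "distinct (concat (map f bs)) \<Longrightarrow> x \<in> set bs \<Longrightarrow> y \<in> set bs \<Longrightarrow> a \<in> set (f x) \<Longrightarrow> a \<in> set (f y) \<Longrightarrow> x = y"
  by (induction bs) auto

lemma subterms_unique:
  "distinct (bvs T) \<Longrightarrow> Rec r B \<in> subterms T \<Longrightarrow> Rec r B' \<in> subterms T \<Longrightarrow> B = B'"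
proof (induction T rule: bvs.induct)
  case (3 s G)
  have ns: "s \<notin> set (bvs G)" and dG: "distinct (bvs G)" using 3(2) by auto
  show ?case
  proof (cases "Rec r B = Rec s G"; cases "Rec r B' = Rec s G")
    assume a: "Rec r B = Rec s G" "Rec r B' \<noteq> Rec s G"
    then have "Rec s B' \<in> subterms G" using 3(4) by simp
    then show ?thesis using ns subterms_bvs by metis
  next
    assume a: "Rec r B \<noteq> Rec s G" "Rec r B' = Rec s G"
    then have "Rec s B \<in> subterms G" using 3(3) by simp
    then show ?thesis using ns subterms_bvs by metis
  next
    assume a: "Rec r B \<noteq> Rec s G" "Rec r B' \<noteq> Rec s G"
    then show ?thesis using 3(1)[OF dG] 3(3,4) by auto
  qed simp
next
  case (4 p bs)
  then obtain b1 b2 where b: "b1 \<in> set bs" "b2 \<in> set bs" "Rec r B \<in> subterms (snd (snd b1))"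
     "Rec r B' \<in> subterms (snd (snd b2))" by auto
  have r1: "r \<in> set (bvs (snd (snd b1)))" using b(3) by (rule subterms_bvs)
  have r2: "r \<in> set (bvs (snd (snd b2)))" using b(4) by (rule subterms_bvs)
  have d: "distinct (concat (map (\<lambda>b. bvs (snd (snd b))) bs))" using 4(2) by simp
  have e: "b1 = b2" using distinct_concat_map_same[OF d b(1) b(2)] r1 r2 by simp
  have dd: "distinct (bvs (snd (snd b1)))" using d b(1) by (auto simp: distinct_concat_iff)
  show ?case using 4(1)[OF b(1) dd b(3)] b(4) e by simp
qed auto



lemma catr_D: "(X, a, X') \<in> catr T \<Longrightarrow>
   (\<exists>r. X = Rec r X' \<and> a = None \<and> X \<in> subterms T)
  \<or> (\<exists>r B. X = Var r \<and> X' = Rec r B \<and> a = None \<and> X' \<in> subterms T)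
  \<or> (\<exists>p bs q m. X = Choice p bs \<and> a = Some (p, q, m) \<and> (q, m, X') \<in> set bs \<and> X \<in> subterms T)"
proof (induction T rule: bvs.induct)
  case (3 r G)
  have sub: "subterms G \<subseteq> subterms (Rec r G)" by auto
  from 3(2) consider "(X, a, X') \<in> catr G" | "(X, a, X') = (Var r, None, Rec r G)"
    | "(X, a, X') = (Rec r G, None, G)" by auto
  then show ?case
  proof cases
    case 1
    then show ?thesis using 3(1) sub by blast
  next
    case 2
    then show ?thesis by auto
  next
    case 3
    then show ?thesis by auto
  qed
next
  case (4 p bs)
  from 4(2) obtain b where b: "b \<in> set bs"
    "(X, a, X') \<in> {(Choice p bs, Some (p, fst b, fst (snd b)), snd (snd b))} \<union> catr (snd (snd b))"
    by auto
  have sub: "subterms (snd (snd b)) \<subseteq> subterms (Choice p bs)" using b(1) by auto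
  from b(2) show ?case
  proof
    assume h: "(X, a, X') \<in> {(Choice p bs, Some (p, fst b, fst (snd b)), snd (snd b))}"
    then have "X = Choice p bs" "a = Some (p, fst b, fst (snd b))" "(fst b, fst (snd b), X') \<in> set bs"
      using b(1) by auto
    then show ?thesis by auto
  next
    assume "(X, a, X') \<in> catr (snd (snd b))"
    then show ?thesis using 4(1)[OF b(1)] sub by blast
  qed
qed auto

lemma catr_I1: "Rec r B \<in> subterms T \<Longrightarrow> (Rec r B, None, B) \<in> catr T"
proof (induction T rule: bvs.induct)
  case (4 p bs)
  then obtain b where "b \<in> set bs" "Rec r B \<in> subterms (snd (snd b))" by auto
  with 4(1) show ?case by fastforce
qed auto

lemma catr_I2: "Rec r B \<in> subterms T \<Longrightarrow> (Var r, None, Rec r B) \<in> catr T"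
proof (induction T rule: bvs.induct)
  case (4 p bs)
  then obtain b where "b \<in> set bs" "Rec r B \<in> subterms (snd (snd b))" by auto
  with 4(1) show ?case by fastforce
qed auto

lemma catr_I3: "Choice p bs \<in> subterms T \<Longrightarrow> (q, m, X') \<in> set bs \<Longrightarrow> (Choice p bs, Some (p, q, m), X') \<in> catr T"
proof (induction T rule: bvs.induct)
  case (4 p' bs')
  show ?case
  proof (cases "Choice p bs = Choice p' bs'")
    case True
    then show ?thesis using 4(3) by force
  next
    case False
    then obtain b where "b \<in> set bs'" "Choice p bs \<in> subterms (snd (snd b))" using 4(2) by auto
    with 4(1) 4(3) show ?thesis by fastforce
  qed
qed auto

lemma catr_sub: "(X, a, X') \<in> catr T \<Longrightarrow> X' \<in> subterms T"
proof -
  assume h: "(X, a, X') \<in> catr T"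
  from catr_D[OF h] show ?thesis
  proof (elim disjE exE conjE)
    fix r assume "X = Rec r X'" "X \<in> subterms T"
    then show ?thesis using subterms_trans[of X T X'] subterms_refl[of X'] by auto
  next
    fix r B assume "X = Var r" "X' = Rec r B" "X' \<in> subterms T"
    then show ?thesis by simp
  next
    fix p bs q m assume "X = Choice p bs" "(q, m, X') \<in> set bs" "X \<in> subterms T"
    then show ?thesis using subterms_trans[of X T X'] subterms_refl[of X'] by force
  qed
qed



fun gpath :: "('s \<times> 'l option \<times> 's) set \<Rightarrow> ('s \<Rightarrow> bool) \<Rightarrow> 'l \<Rightarrow> 's \<Rightarrow> ('l option \<times> 's) list \<Rightarrow> bool" where
  "gpath T P a X [] = False"
| "gpath T P a X [(l, X')] = (l = Some a \<and> (X, l, X') \<in> T \<and> P X')"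
| "gpath T P a X ((l, X') # q # qs) = (l = None \<and> (X, l, X') \<in> T \<and> gpath T P a X' (q # qs))"

lemma gpath_cons: "gpath T P a X' ps \<Longrightarrow> (X, None, X') \<in> T \<Longrightarrow> gpath T P a X ((None, X') # ps)"
  by (cases ps) auto

definition eqv :: "('p, 'm, 'v) gty \<Rightarrow> ('p, 'm, 'v) gty \<Rightarrow> bool" where
  "eqv Y Y' \<longleftrightarrow> (\<forall>\<alpha> Z. step_CR Y \<alpha> Z \<longleftrightarrow> step_CR Y' \<alpha> Z)"

lemma sub_Rec: "B \<in> subterms (Rec r B)"
  using subterms_refl[of B] by simp

lemma sub_Choice: "b \<in> set bs \<Longrightarrow> snd (snd b) \<in> subterms (Choice p bs)"
  using subterms_refl[of "snd (snd b)"] by auto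

context
  fixes G :: "('p, 'm, 'v) gty"
  assumes wf: "wf_gty G"
begin

lemma wf_dist: "distinct (bvs G)" and wf_disj: "set (bvs G) \<inter> fv G = {}"
  using wf unfolding wf_gty_def by auto

inductive ctx :: "('v \<Rightarrow> ('p, 'm, 'v) gty) \<Rightarrow> ('p, 'm, 'v) gty \<Rightarrow> bool" where
  init: "ctx Var G"
| rec: "ctx \<sigma> (Rec r B) \<Longrightarrow> ctx (\<sigma>(r := ssubst \<sigma> (Rec r B))) B"
| ch: "ctx \<sigma> (Choice p bs) \<Longrightarrow> b \<in> set bs \<Longrightarrow> ctx \<sigma> (snd (snd b))"

lemma I1: "ctx \<sigma> X \<Longrightarrow> X \<in> subterms G"
proof (induction rule: ctx.induct)
  case init
  then show ?case by (rule subterms_refl)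
next
  case (rec \<sigma> r B)
  show ?case by (rule subterms_trans[OF rec.IH sub_Rec])
next
  case (ch \<sigma> p bs b)
  show ?case by (rule subterms_trans[OF ch.IH sub_Choice[OF ch.hyps(2)]])
qed

lemma I2: "ctx \<sigma> X \<Longrightarrow> \<forall>x\<in>fv X. fv (\<sigma> x) \<inter> set (bvs G) = {}"
proof (induction rule: ctx.induct)
  case init
  then show ?case using wf_disj by auto
next
  case (rec \<sigma> r B)
  show ?case
  proof
    fix x assume x: "x \<in> fv B"
    show "fv ((\<sigma>(r := ssubst \<sigma> (Rec r B))) x) \<inter> set (bvs G) = {}"
    proof (cases "x = r")
      case True
      have "fv (ssubst \<sigma> (Rec r B)) \<subseteq> (\<Union>y\<in>fv (Rec r B). fv (\<sigma> y))" by (rule fv_ssubst)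
      then show ?thesis using True rec.IH by auto
    next
      case False
      then show ?thesis using x rec.IH by auto
    qed
  qed
next
  case (ch \<sigma> p bs b)
  then show ?case by auto
qed

lemma I3: "ctx \<sigma> X \<Longrightarrow> \<forall>x\<in>fv X. x \<in> set (bvs G) \<longrightarrow> (\<exists>\<sigma>' B. ctx \<sigma>' (Rec x B) \<and> \<sigma> x = ssubst \<sigma>' (Rec x B))"
proof (induction rule: ctx.induct)
  case init
  then show ?case using wf_disj by auto
next
  case (rec \<sigma> r B)
  show ?case
  proof (intro ballI impI)
    fix x assume x: "x \<in> fv B" "x \<in> set (bvs G)"
    show "\<exists>\<sigma>' B'. ctx \<sigma>' (Rec x B') \<and> (\<sigma>(r := ssubst \<sigma> (Rec r B))) x = ssubst \<sigma>' (Rec x B')"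
    proof (cases "x = r")
      case True
      then show ?thesis using rec.hyps by auto
    next
      case False
      then show ?thesis using x rec.IH by auto
    qed
  qed
next
  case (ch \<sigma> p bs b)
  then show ?case by auto
qed

lemma I5: "ctx \<sigma> X \<Longrightarrow> \<forall>x\<in>fv X. x \<notin> set (bvs G) \<longrightarrow> \<sigma> x = Var x"
proof (induction rule: ctx.induct)
  case init
  then show ?case by auto
next
  case (rec \<sigma> r B)
  have "r \<in> set (bvs G)" using I1[OF rec.hyps] by (rule subterms_bvs)
  then show ?case using rec.IH by auto
next
  case (ch \<sigma> p bs b)
  then show ?case by auto
qed

lemma VarL: "ctx \<sigma> (Var s) \<Longrightarrow> (\<forall>v. \<sigma> s \<noteq> Var v) \<Longrightarrow>
  \<exists>\<sigma>' B. ctx \<sigma>' (Rec s B) \<and> \<sigma> s = ssubst \<sigma>' (Rec s B)"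
proof -
  assume c: "ctx \<sigma> (Var s)" and ne: "\<forall>v. \<sigma> s \<noteq> Var v"
  have "s \<in> set (bvs G)"
  proof (rule ccontr)
    assume "s \<notin> set (bvs G)"
    then have "\<sigma> s = Var s" using I5[OF c] by simp
    then show False using ne by blast
  qed
  then show ?thesis using I3[OF c] by simp
qed

lemma unfold_eq:
  assumes c: "ctx \<sigma> (Rec r B)"
  shows "subst (ssubst (\<sigma>(r := Var r)) B) r (ssubst \<sigma> (Rec r B)) = ssubst (\<sigma>(r := ssubst \<sigma> (Rec r B))) B"
proof (rule subst_ssubst)
  have s: "Rec r B \<in> subterms G" using I1[OF c] .
  have "distinct (bvs (Rec r B))" using subterms_distinct[OF s wf_dist] .
  then show "r \<notin> set (bvs B)" by simp
  have rb: "r \<in> set (bvs G)" using s by (rule subterms_bvs)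
  show "\<forall>x\<in>fv B - {r}. r \<notin> fv (\<sigma> x)"
    using I2[OF c] rb by auto
qed

lemma F1:
  assumes c: "ctx \<sigma> X" and t: "(X, None, X') \<in> catr G"
  shows "\<exists>\<sigma>'. ctx \<sigma>' X' \<and> eqv (ssubst \<sigma> X) (ssubst \<sigma>' X')"
  using catr_D[OF t]
proof (elim disjE exE conjE)
  fix r assume X: "X = Rec r X'"
  have c': "ctx \<sigma> (Rec r X')" using c X by simp
  have "eqv (ssubst \<sigma> X) (ssubst (\<sigma>(r := ssubst \<sigma> (Rec r X'))) X')"
    unfolding eqv_def X
    using step_Rec_iff[of r "ssubst (\<sigma>(r := Var r)) X'"] unfold_eq[OF c'] by simp
  then show ?thesis using ctx.rec[OF c'] by blast
next
  fix r B assume X: "X = Var r" and X': "X' = Rec r B" and s: "X' \<in> subterms G"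
  have rb: "r \<in> set (bvs G)" using subterms_bvs[of r B G] s X' by simp
  obtain \<sigma>' B' where h: "ctx \<sigma>' (Rec r B')" "\<sigma> r = ssubst \<sigma>' (Rec r B')"
    using I3[OF c] X rb by auto
  have "B' = B" using subterms_unique[OF wf_dist I1[OF h(1)]] s X' by blast
  then show ?thesis using h X X' unfolding eqv_def by auto
qed auto

lemma F2:
  assumes c: "ctx \<sigma> X" and t: "(X, Some \<alpha>, X') \<in> catr G"
  shows "ctx \<sigma> X' \<and> step_CR (ssubst \<sigma> X) \<alpha> (ssubst \<sigma> X')"
  using catr_D[OF t]
proof (elim disjE exE conjE)
  fix p bs q m assume X: "X = Choice p bs" and a: "Some \<alpha> = Some (p, q, m)" and b: "(q, m, X') \<in> set bs"
  have "ctx \<sigma> X'" using ctx.ch[of \<sigma> p bs "(q, m, X')"] c X b by simp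
  moreover have "(q, m, ssubst \<sigma> X') \<in> set (map (\<lambda>(q, m, G). (q, m, ssubst \<sigma> G)) bs)"
    using b by force
  then have "step_CR (ssubst \<sigma> X) (p, q, m) (ssubst \<sigma> X')" unfolding X by (simp add: step_CR.Choice)
  ultimately show ?thesis using a by simp
qed auto


lemma B1:
  "step_CR Y \<alpha> Y' \<Longrightarrow> ctx \<sigma> X \<Longrightarrow> Y = ssubst \<sigma> X \<Longrightarrow>
   \<exists>ps. gpath (catr G) (\<lambda>X'. \<exists>\<sigma>'. ctx \<sigma>' X' \<and> Y' = ssubst \<sigma>' X') \<alpha> X ps"
proof (induction arbitrary: \<sigma> X rule: step_CR.induct)
  case (Choice q m Y' bsY p)
  show ?case
  proof (cases X)
    case End
    then show ?thesis using Choice.prems by simp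
  next
    case (Rec s B)
    then show ?thesis using Choice.prems by simp
  next
    case (Var s)
    then have c: "ctx \<sigma> (Var s)" and e: "\<sigma> s = Choice p bsY" using Choice.prems by auto
    obtain \<sigma>' B where "\<sigma> s = ssubst \<sigma>' (Rec s B)" using VarL[OF c] e by auto
    then show ?thesis using e by simp
  next
    case (Choice p' bs)
    let ?f = "\<lambda>(q, m, G). (q, m, ssubst \<sigma> G)"
    have e: "p = p'" "bsY = map ?f bs" using Choice Choice.prems by auto
    then obtain b where b: "b \<in> set bs" "?f b = (q, m, Y')" using Choice.hyps by auto
    obtain X' where bX: "b = (q, m, X')" and Y': "Y' = ssubst \<sigma> X'" using b(2)
      by (cases b) auto
    have c: "ctx \<sigma> X" using Choice.prems by simp
    have tr: "(X, Some (p, q, m), X') \<in> catr G"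
      using catr_I3[OF I1[OF c[unfolded Choice]], of q m X'] b(1) bX e(1) Choice by simp
    have "ctx \<sigma> X'" using ctx.ch[OF c[unfolded Choice] b(1)] bX e(1) by simp
    then have "gpath (catr G) (\<lambda>X'. \<exists>\<sigma>'. ctx \<sigma>' X' \<and> Y' = ssubst \<sigma>' X') (p, q, m) X [(Some (p, q, m), X')]"
      using tr Y' by auto
    then show ?thesis by blast
  qed
next
  case (Rec G0 r \<alpha> G')
  let ?P = "\<lambda>X'. \<exists>\<sigma>'. ctx \<sigma>' X' \<and> G' = ssubst \<sigma>' X'"
  have recc: "\<exists>ps. gpath (catr G) ?P \<alpha> (Rec r B) ps"
    if c: "ctx \<sigma> (Rec r B)" and e: "ssubst \<sigma> (Rec r B) = Rec r G0" for \<sigma> B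
  proof -
    have G0: "G0 = ssubst (\<sigma>(r := Var r)) B" using e by simp
    have c': "ctx (\<sigma>(r := ssubst \<sigma> (Rec r B))) B" by (rule ctx.rec[OF c])
    have "subst G0 r (Rec r G0) = ssubst (\<sigma>(r := ssubst \<sigma> (Rec r B))) B"
      using unfold_eq[OF c] G0 e by simp
    from Rec.IH[OF c' this] obtain ps where "gpath (catr G) ?P \<alpha> B ps" by blast
    then have "gpath (catr G) ?P \<alpha> (Rec r B) ((None, B) # ps)"
      by (rule gpath_cons) (rule catr_I1[OF I1[OF c]])
    then show ?thesis by blast
  qed
  show ?case
  proof (cases X)
    case End
    then show ?thesis using Rec.prems by simp
  next
    case (Choice p bs)
    then show ?thesis using Rec.prems by simp
  next
    case (Rec s B)
    then have "s = r" using Rec.prems by simp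
    then show ?thesis using recc[of \<sigma> B] Rec \<open>ctx \<sigma> X\<close> \<open>Rec r G0 = ssubst \<sigma> X\<close> by simp
  next
    case (Var s)
    then have c: "ctx \<sigma> (Var s)" and e: "\<sigma> s = Rec r G0" using Rec.prems by auto
    obtain \<sigma>' B where h: "ctx \<sigma>' (Rec s B)" "\<sigma> s = ssubst \<sigma>' (Rec s B)" using VarL[OF c] e by auto
    then have sr: "s = r" using e by simp
    obtain ps where ps: "gpath (catr G) ?P \<alpha> (Rec s B) ps" using recc[of \<sigma>' B] h e sr by auto
    have "gpath (catr G) ?P \<alpha> (Var s) ((None, Rec s B) # ps)"
      by (rule gpath_cons[OF ps]) (rule catr_I2[OF I1[OF h(1)]])
    then show ?thesis using Var by blast
  qed
qed

end


lemma fin_prefix: "inf_run S T s0 st l \<Longrightarrow> fin_run S T (st k) (map l [k..<k+n])"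
proof (induction n arbitrary: k)
  case 0
  then show ?case by (auto simp: inf_run_def intro: fin_run.nil)
next
  case (Suc n)
  have e: "[k..<k + Suc n] = k # [Suc k..<Suc k + n]" by (simp add: upt_rec)
  have "st k \<in> S" "(st k, l k, st (Suc k)) \<in> T" using Suc.prems by (auto simp: inf_run_def)
  then show ?case unfolding e using Suc.IH[OF Suc.prems, of "Suc k"] by (auto intro: fin_run.step)
qed

lemma inf_fin: "inf_run S T s0 st l \<Longrightarrow> inf_trace l (Fin ws) \<Longrightarrow> \<exists>ls. fin_run S T s0 ls \<and> ws = erase ls"
proof -
  assume r: "inf_run S T s0 st l" and t: "inf_trace l (Fin ws)"
  then obtain n where ws: "ws = erase (map l [0..<n])" unfolding inf_trace_def by auto
  have "fin_run S T (st 0) (map l [0..<0+n])" by (rule fin_prefix[OF r])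
  moreover have "st 0 = s0" using r by (simp add: inf_run_def)
  ultimately show ?thesis using ws by auto
qed

lemma gpath_run:
  "gpath T P a X ps \<Longrightarrow> X \<in> S \<Longrightarrow> (\<And>x b y. (x, b, y) \<in> T \<Longrightarrow> y \<in> S) \<Longrightarrow>
   \<exists>X'. P X' \<and> (\<forall>ls. fin_run S T X' ls \<longrightarrow> fin_run S T X (map fst ps @ ls)) \<and> erase (map fst ps) = [a]"
proof (induction T P a X ps rule: gpath.induct)
  case (2 T P a X l X')
  then show ?case by (auto intro: fin_run.step)
next
  case (3 T P a X l X' q qs)
  then have X': "X' \<in> S" by auto
  from 3 X' obtain Y where Y: "P Y" "\<forall>ls. fin_run S T Y ls \<longrightarrow> fin_run S T X' (map fst (q # qs) @ ls)"
    "erase (map fst (q # qs)) = [a]" by auto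
  have lN: "l = None" and tr: "(X, None, X') \<in> T" using 3(2) by auto
  have "\<forall>ls. fin_run S T Y ls \<longrightarrow> fin_run S T X (map fst ((l, X') # q # qs) @ ls)"
  proof (intro allI impI)
    fix ls assume "fin_run S T Y ls"
    then have "fin_run S T X' (map fst (q # qs) @ ls)" using Y(2) by blast
    then show "fin_run S T X (map fst ((l, X') # q # qs) @ ls)"
      using fin_run.step[OF 3(3) tr] lN by simp
  qed
  then show ?case using Y(1,3) lN by auto
qed auto

lemma CL:
  fixes l :: "nat \<Rightarrow> 'l option" and c :: "nat \<Rightarrow> nat" and a :: "nat \<Rightarrow> 'l"
  assumes c0: "c 0 = 0" and cs: "\<And>i. c (Suc i) = (if l i = None then c i else Suc (c i))"
    and lab: "\<And>i. l i \<noteq> None \<Longrightarrow> l i = Some (a (c i))" and inf: "\<And>i. \<exists>j\<ge>i. l j \<noteq> None"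
  shows "inf_trace l (Inf a)"
proof -
  have mono: "mono c" unfolding mono_iff_le_Suc using cs by simp
  have vis_lt: "c i < c j" if "l i \<noteq> None" "i < j" for i j
  proof -
    have "c (Suc i) = Suc (c i)" using cs that(1) by simp
    moreover have "c (Suc i) \<le> c j" using mono that(2) by (simp add: monoD)
    ultimately show ?thesis by simp
  qed
  have unb: "\<exists>i. k \<le> c i" for k
  proof (induction k)
    case 0 then show ?case by simp
  next
    case (Suc k)
    then obtain i where i: "k \<le> c i" by blast
    obtain j where j: "j \<ge> i" "l j \<noteq> None" using inf by blast
    have "c i \<le> c j" using mono j(1) by (simp add: monoD)
    moreover have "c (Suc j) = Suc (c j)" using cs j(2) by simp
    ultimately show ?case using i by (metis Suc_le_mono le_trans)
  qed
  have below: "k < c i \<Longrightarrow> \<exists>j<i. l j \<noteq> None \<and> c j = k" for k i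
  proof (induction i)
    case 0 then show ?case using c0 by simp
  next
    case (Suc i)
    show ?case
    proof (cases "k < c i")
      case True then show ?thesis using Suc.IH by (meson less_SucI)
    next
      case False
      then have "c i \<le> k" by simp
      moreover have "c (Suc i) \<le> Suc (c i)" using cs by simp
      ultimately have "c i = k" "c (Suc i) \<noteq> c i" using Suc.prems by auto
      then have "l i \<noteq> None" "c i = k" using cs by (auto split: if_splits)
      then show ?thesis by blast
    qed
  qed
  have ex: "\<exists>i. l i \<noteq> None \<and> c i = k" for k
  proof -
    obtain i where "Suc k \<le> c i" using unb by blast
    then show ?thesis using below[of k i] by auto
  qed
  define e where "e k = (SOME i. l i \<noteq> None \<and> c i = k)" for k
  have e: "l (e k) \<noteq> None \<and> c (e k) = k" for k unfolding e_def by (rule someI_ex[OF ex])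
  have sm: "strict_mono e"
    unfolding strict_mono_Suc_iff
  proof
    fix k show "e k < e (Suc k)"
    proof (rule ccontr)
      assume "\<not> e k < e (Suc k)"
      then have "c (e (Suc k)) \<le> c (e k)" using mono by (simp add: monoD)
      then show False using e[of k] e[of "Suc k"] by simp
    qed
  qed
  have rng: "range e = {i. l i \<noteq> None}"
  proof
    show "range e \<subseteq> {i. l i \<noteq> None}" using e by auto
    show "{i. l i \<noteq> None} \<subseteq> range e"
    proof
      fix i assume i: "i \<in> {i. l i \<noteq> None}"
      have "e (c i) = i"
      proof (rule ccontr)
        assume ne: "e (c i) \<noteq> i"
        show False
        proof (cases "e (c i) < i")
          case True
          then have "c (e (c i)) < c i" using vis_lt e[of "c i"] by blast
          then show False using e[of "c i"] by simp
        next
          case False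
          then have "i < e (c i)" using ne by simp
          then have "c i < c (e (c i))" using vis_lt i by blast
          then show False using e[of "c i"] by simp
        qed
      qed
      then show "i \<in> range e" by (metis rangeI)
    qed
  qed
  have "\<forall>k. l (e k) = Some (a k)" using e lab by metis
  then show ?thesis unfolding inf_trace_def using sm rng by blast
qed

lemma smono_surj_id: "strict_mono (e :: nat \<Rightarrow> nat) \<Longrightarrow> surj e \<Longrightarrow> e k = k"
proof (induction k rule: less_induct)
  case (less k)
  obtain j where j: "k = e j" using less.prems(2) by (metis surj_def)
  have ge: "k \<le> e k" using less.prems(1) by (rule strict_mono_imp_increasing)
  show ?case
  proof (cases "j < k")
    case True
    then have "e j = j" using less.IH less.prems by blast
    then show ?thesis using j True by simp
  next
    case False
    then have "e k \<le> e j" using less.prems(1) by (simp add: strict_mono_less_eq)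
    then show ?thesis using j ge by simp
  qed
qed



lemma AM:
  fixes P :: "nat \<Rightarrow> 's \<Rightarrow> bool" and T :: "('s \<times> 'l option \<times> 's) set" and a :: "nat \<Rightarrow> 'l"
  assumes H: "\<And>k X. P k X \<Longrightarrow> \<exists>ps. gpath T (P (Suc k)) (a k) X ps"
    and P0: "P 0 X0" and PS: "\<And>k X. P k X \<Longrightarrow> X \<in> S" and TS: "\<And>x b y. (x, b, y) \<in> T \<Longrightarrow> y \<in> S"
  shows "\<exists>st l. inf_run S T X0 st l \<and> inf_trace l (Inf a)"
proof -
  define pth where "pth k X = (SOME ps. gpath T (P (Suc k)) (a k) X ps)" for k X
  define eff :: "'s \<times> nat \<times> ('l option \<times> 's) list \<Rightarrow> ('l option \<times> 's) list"
    where "eff c = (if snd (snd c) = [] then pth (fst (snd c)) (fst c) else snd (snd c))" for c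
  define nxt :: "'s \<times> nat \<times> ('l option \<times> 's) list \<Rightarrow> 's \<times> nat \<times> ('l option \<times> 's) list"
    where "nxt c = (snd (hd (eff c)), if fst (hd (eff c)) = None then fst (snd c) else Suc (fst (snd c)), tl (eff c))" for c
  define Inv :: "'s \<times> nat \<times> ('l option \<times> 's) list \<Rightarrow> bool"
    where "Inv c = (fst c \<in> S \<and> (if snd (snd c) = [] then P (fst (snd c)) (fst c)
                     else gpath T (P (Suc (fst (snd c)))) (a (fst (snd c))) (fst c) (snd (snd c))))" for c
  define cfg where "cfg i = (nxt ^^ i) (X0, 0, [])" for i
  have cfgS: "cfg (Suc i) = nxt (cfg i)" for i by (simp add: cfg_def)
  have eff_gp: "gpath T (P (Suc k)) (a k) X (eff (X, k, pend))" if "Inv (X, k, pend)" for X k pend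
  proof (cases "pend = []")
    case True
    then have "P k X" using that by (simp add: Inv_def)
    then show ?thesis using True someI_ex[OF H] by (simp add: eff_def pth_def)
  next
    case False
    then show ?thesis using that by (simp add: Inv_def eff_def)
  qed
  have key: "(X, lb, X') \<in> T \<and> nxt (X, k, pend) = (X', if lb = None then k else Suc k, rest)
      \<and> Inv (nxt (X, k, pend)) \<and> (lb \<noteq> None \<longrightarrow> lb = Some (a k)) \<and> (lb = None \<longrightarrow> rest \<noteq> [])"
    if I: "Inv (X, k, pend)" and E: "eff (X, k, pend) = (lb, X') # rest" for X k pend lb X' rest
  proof -
    have g: "gpath T (P (Suc k)) (a k) X ((lb, X') # rest)" using eff_gp[OF I] E by simp
    have nx: "nxt (X, k, pend) = (X', if lb = None then k else Suc k, rest)" using E by (simp add: nxt_def)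
    show ?thesis
    proof (cases rest)
      case Nil
      then have "lb = Some (a k)" "(X, lb, X') \<in> T" "P (Suc k) X'" using g by auto
      then show ?thesis using nx Nil PS by (auto simp: Inv_def)
    next
      case (Cons q qs)
      then have "lb = None" "(X, lb, X') \<in> T" "gpath T (P (Suc k)) (a k) X' (q # qs)" using g by auto
      then show ?thesis using nx Cons TS by (auto simp: Inv_def)
    qed
  qed
  have eff_ne: "eff (X, k, pend) \<noteq> []" if "Inv (X, k, pend)" for X k pend
    using eff_gp[OF that] by (cases "eff (X, k, pend)") auto
  have inv: "Inv (cfg i)" for i
  proof (induction i)
    case 0 then show ?case using P0 PS by (simp add: cfg_def Inv_def)
  next
    case (Suc i)
    obtain X k pend where c: "cfg i = (X, k, pend)" by (cases "cfg i") auto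
    obtain lb X' rest where E: "eff (X, k, pend) = (lb, X') # rest"
      using eff_ne[of X k pend] Suc c by (metis list.exhaust surj_pair)
    have I: "Inv (X, k, pend)" using Suc c by simp
    have K: "Inv (nxt (X, k, pend))" using key[OF I E] by blast
    show ?case unfolding cfgS c using K .
  qed
  define st where "st i = fst (cfg i)" for i
  define l where "l i = fst (hd (eff (cfg i)))" for i
  define cn where "cn i = fst (snd (cfg i))" for i
  have loc: "(st i, l i, st (Suc i)) \<in> T \<and> cn (Suc i) = (if l i = None then cn i else Suc (cn i))
     \<and> (l i \<noteq> None \<longrightarrow> l i = Some (a (cn i)))
     \<and> (l i = None \<longrightarrow> length (eff (cfg (Suc i))) < length (eff (cfg i)))" for i
  proof -
    obtain X k pend where c: "cfg i = (X, k, pend)" by (cases "cfg i") auto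
    obtain lb X' rest where E: "eff (X, k, pend) = (lb, X') # rest"
      using eff_ne[of X k pend] inv[of i] c by (metis list.exhaust surj_pair)
    have I: "Inv (X, k, pend)" using inv[of i] c by simp
    have K: "(X, lb, X') \<in> T \<and> nxt (X, k, pend) = (X', if lb = None then k else Suc k, rest)
      \<and> Inv (nxt (X, k, pend)) \<and> (lb \<noteq> None \<longrightarrow> lb = Some (a k)) \<and> (lb = None \<longrightarrow> rest \<noteq> [])"
      by (rule key[OF I E])
    have c': "cfg (Suc i) = (X', if lb = None then k else Suc k, rest)" using K cfgS c by simp
    have "lb = None \<longrightarrow> eff (cfg (Suc i)) = rest" using c' K by (simp add: eff_def)
    then show ?thesis using K c c' E by (auto simp: st_def l_def cn_def)
  qed
  have run: "inf_run S T X0 st l"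
    unfolding inf_run_def
  proof (intro conjI allI)
    show "st 0 = X0" by (simp add: st_def cfg_def)
    fix i
    show "st i \<in> S" using inv[of i] by (cases "cfg i") (simp add: st_def Inv_def)
    show "(st i, l i, st (Suc i)) \<in> T" using loc by blast
  qed
  have vis: "\<forall>i. length (eff (cfg i)) = n \<longrightarrow> (\<exists>j\<ge>i. l j \<noteq> None)" for n
  proof (induction n rule: less_induct)
    case (less n)
    show ?case
    proof (intro allI impI)
      fix i assume n: "length (eff (cfg i)) = n"
      show "\<exists>j\<ge>i. l j \<noteq> None"
      proof (cases "l i = None")
        case False then show ?thesis by blast
      next
        case True
        then have "length (eff (cfg (Suc i))) < n" using loc[of i] n by simp
        then obtain j where "j \<ge> Suc i" "l j \<noteq> None" using less.IH by blast
        then show ?thesis by (intro exI[of _ j]) simp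
      qed
    qed
  qed
  have "inf_trace l (Inf a)"
  proof (rule CL[where c = cn])
    show "cn 0 = 0" by (simp add: cn_def cfg_def)
    show "\<And>i. cn (Suc i) = (if l i = None then cn i else Suc (cn i))" using loc by blast
    show "\<And>i. l i \<noteq> None \<Longrightarrow> l i = Some (a (cn i))" using loc by blast
    show "\<And>i. \<exists>j\<ge>i. l j \<noteq> None" using vis by blast
  qed
  then show ?thesis using run by blast
qed



lemma erase_append: "erase (xs @ ys) = erase xs @ erase ys"
  by (induction xs rule: erase.induct) auto

lemma lang_alt: "lang (S, s0, T) = {Fin (erase ls) | ls. fin_run S T s0 ls}
   \<union> {Inf f | f. \<exists>st l. inf_run S T s0 st l \<and> inf_trace l (Inf f)}"
proof -
  have "w \<in> {Fin (erase ls) | ls. fin_run S T s0 ls}"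
    if "inf_run S T s0 st l" "inf_trace l w" "w = Fin ws" for w st l ws
    using inf_fin[OF that(1)] that(2,3) by blast
  then show ?thesis unfolding lang_def by (auto, metis word.exhaust)
qed

context
  fixes G :: "('p, 'm, 'v) gty"
  assumes wf: "wf_gty G"
begin

definition R where "R X Y \<longleftrightarrow> (\<exists>\<sigma>. ctx G \<sigma> X \<and> eqv (ssubst \<sigma> X) Y)"

abbreviation CRT :: "(('p, 'm, 'v) gty \<times> ('p, 'm) interaction option \<times> ('p, 'm, 'v) gty) set" where
  "CRT \<equiv> {(G1, Some \<alpha>, G2) | G1 \<alpha> G2. step_CR G1 \<alpha> G2}"

lemma CRT_I: "step_CR Y \<alpha> Y' \<Longrightarrow> (Y, Some \<alpha>, Y') \<in> CRT"
  by blast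

lemma TS: "(x, b, y) \<in> catr G \<Longrightarrow> y \<in> subterms G"
  by (rule catr_sub)

lemma FR1: "R X Y \<Longrightarrow> (X, None, X') \<in> catr G \<Longrightarrow> R X' Y"
proof -
  assume r: "R X Y" and t: "(X, None, X') \<in> catr G"
  then obtain \<sigma> where c: "ctx G \<sigma> X" and e: "eqv (ssubst \<sigma> X) Y" unfolding R_def by blast
  obtain \<sigma>' where "ctx G \<sigma>' X'" "eqv (ssubst \<sigma> X) (ssubst \<sigma>' X')" using F1[OF wf c t] by blast
  then show ?thesis using e unfolding R_def eqv_def by blast
qed

lemma FR2: "R X Y \<Longrightarrow> (X, Some \<alpha>, X') \<in> catr G \<Longrightarrow> \<exists>Y'. step_CR Y \<alpha> Y' \<and> R X' Y'"
proof -
  assume r: "R X Y" and t: "(X, Some \<alpha>, X') \<in> catr G"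
  then obtain \<sigma> where c: "ctx G \<sigma> X" and e: "eqv (ssubst \<sigma> X) Y" unfolding R_def by blast
  have "ctx G \<sigma> X'" "step_CR (ssubst \<sigma> X) \<alpha> (ssubst \<sigma> X')" using F2[OF wf c t] by auto
  then show ?thesis using e unfolding R_def eqv_def by blast
qed

lemma R_init: "R G G"
  unfolding R_def eqv_def using ctx.init[OF wf] ssubst_Var[of G] by metis

lemma fwd_fin: "fin_run (subterms G) (catr G) X ls \<Longrightarrow> R X Y \<Longrightarrow>
  \<exists>ls'. fin_run UNIV CRT Y ls' \<and> erase ls' = erase ls"
proof (induction arbitrary: Y rule: fin_run.induct)
  case (nil s)
  then show ?case by (intro exI[of _ "[]"]) (auto intro: fin_run.nil)
next
  case (step s a s' ls)
  show ?case
  proof (cases a)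
    case None
    then have "R s' Y" using FR1 step by blast
    then show ?thesis using step.IH None by auto
  next
    case (Some \<alpha>)
    then obtain Y' where Y': "step_CR Y \<alpha> Y'" "R s' Y'" using FR2 step by blast
    then obtain ls' where ls': "fin_run UNIV CRT Y' ls'" "erase ls' = erase ls" using step.IH by blast
    have "fin_run UNIV CRT Y (Some \<alpha> # ls')" using fin_run.step[OF _ CRT_I[OF Y'(1)] ls'(1)] by simp
    then show ?thesis using ls'(2) Some by (intro exI[of _ "Some \<alpha> # ls'"]) simp
  qed
qed

lemma fwd_inf:
  assumes r: "inf_run (subterms G) (catr G) G st l" and t: "inf_trace l (Inf f)"
  shows "\<exists>Ys l'. inf_run UNIV CRT G Ys l' \<and> inf_trace l' (Inf f)"
proof -
  obtain e where sm: "strict_mono e" and rng: "range e = {i. l i \<noteq> None}" and le: "\<And>k. l (e k) = Some (f k)"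
    using t unfolding inf_trace_def by auto
  have tr: "(st i, l i, st (Suc i)) \<in> catr G" for i using r by (simp add: inf_run_def)
  have eps: "R (st i) Y \<Longrightarrow> (\<forall>j. i \<le> j \<and> j < i + d \<longrightarrow> l j = None) \<Longrightarrow> R (st (i + d)) Y" for i d Y
  proof (induction d)
    case 0 then show ?case by simp
  next
    case (Suc d)
    then have "R (st (i + d)) Y" by simp
    moreover have "l (i + d) = None" using Suc.prems(2) by simp
    ultimately show ?case using FR1 tr[of "i + d"] by simp
  qed
  have nv: "l j = None" if "\<forall>m. j \<noteq> e m" for j
    using that rng by (metis (mono_tags, lifting) mem_Collect_eq rangeE)
  have between: "l j = None" if "e k < j" "j < e (Suc k)" for k j
  proof -
    have "j \<noteq> e m" for m
    proof
      assume "j = e m"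
      then have "k < m" "m < Suc k" using that sm by (auto simp: strict_mono_less)
      then show False by simp
    qed
    then show ?thesis using nv by blast
  qed
  have before: "l j = None" if "j < e 0" for j
  proof -
    have "j \<noteq> e m" for m using that sm by (metis not_less_zero strict_mono_less)
    then show ?thesis using nv by blast
  qed
  have st0: "st 0 = G" using r by (simp add: inf_run_def)
  have R0: "R (st (e 0)) G" using eps[of 0 G "e 0"] R_init st0 before by simp
  have stepk: "\<exists>Y'. step_CR Y (f k) Y' \<and> R (st (e (Suc k))) Y'" if RY: "R (st (e k)) Y" for k Y
  proof -
    obtain Y' where Y': "step_CR Y (f k) Y'" "R (st (Suc (e k))) Y'"
      using FR2[OF RY] tr[of "e k"] le[of k] by metis
    have lt: "e k < e (Suc k)" using sm by (simp add: strict_mono_less)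
    have "R (st (Suc (e k) + (e (Suc k) - Suc (e k)))) Y'"
      using eps[OF Y'(2), of "e (Suc k) - Suc (e k)"] between[of k] lt by auto
    then show ?thesis using Y'(1) lt by (intro exI[of _ Y']) (simp add: Suc_le_eq)
  qed
  define Ys where "Ys = rec_nat G (\<lambda>k Y. SOME Y'. step_CR Y (f k) Y' \<and> R (st (e (Suc k))) Y')"
  have Ys0: "Ys 0 = G" by (simp add: Ys_def)
  have YsS: "Ys (Suc k) = (SOME Y'. step_CR (Ys k) (f k) Y' \<and> R (st (e (Suc k))) Y')" for k
    by (simp add: Ys_def)
  have RY: "R (st (e k)) (Ys k)" for k
  proof (induction k)
    case 0 then show ?case using R0 Ys0 by simp
  next
    case (Suc k)
    show ?case unfolding YsS using someI_ex[OF stepk[OF Suc]] by blast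
  qed
  have SY: "step_CR (Ys k) (f k) (Ys (Suc k))" for k
    unfolding YsS using someI_ex[OF stepk[OF RY[of k]]] by blast
  have "inf_run UNIV CRT G Ys (\<lambda>k. Some (f k))"
    unfolding inf_run_def using Ys0 CRT_I[OF SY] by auto
  moreover have "inf_trace (\<lambda>k. Some (f k)) (Inf f)"
    unfolding inf_trace_def by (auto intro!: exI[of _ id] simp: strict_mono_def)
  ultimately show ?thesis by blast
qed

lemma bwd_fin: "fin_run UNIV CRT Y ls \<Longrightarrow> ctx G \<sigma> X \<Longrightarrow> Y = ssubst \<sigma> X \<Longrightarrow>
  \<exists>ls'. fin_run (subterms G) (catr G) X ls' \<and> erase ls' = erase ls"
proof (induction arbitrary: \<sigma> X rule: fin_run.induct)
  case (nil s)
  then show ?case using I1[OF wf nil(2)] by (auto intro: fin_run.nil)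
next
  case (step s a s' ls)
  obtain \<alpha> where a: "a = Some \<alpha>" and st: "step_CR s \<alpha> s'" using step.hyps(2) by auto
  obtain ps where ps: "gpath (catr G) (\<lambda>X'. \<exists>\<sigma>'. ctx G \<sigma>' X' \<and> s' = ssubst \<sigma>' X') \<alpha> X ps"
    using B1[OF wf st step.prems] by blast
  have "\<exists>X'. (\<exists>\<sigma>'. ctx G \<sigma>' X' \<and> s' = ssubst \<sigma>' X') \<and>
    (\<forall>ls. fin_run (subterms G) (catr G) X' ls \<longrightarrow> fin_run (subterms G) (catr G) X (map fst ps @ ls))
    \<and> erase (map fst ps) = [\<alpha>]"
  proof (rule gpath_run[OF ps I1[OF wf step.prems(1)]])
    fix x b y assume "(x, b, y) \<in> catr G"
    then show "y \<in> subterms G" by (rule TS)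
  qed
  then obtain X' where X': "\<exists>\<sigma>'. ctx G \<sigma>' X' \<and> s' = ssubst \<sigma>' X'"
    "\<forall>ls. fin_run (subterms G) (catr G) X' ls \<longrightarrow> fin_run (subterms G) (catr G) X (map fst ps @ ls)"
    "erase (map fst ps) = [\<alpha>]" by blast
  obtain ls' where ls': "fin_run (subterms G) (catr G) X' ls'" "erase ls' = erase ls"
    using X'(1) step.IH by blast
  show ?case using X'(2,3) ls' a by (intro exI[of _ "map fst ps @ ls'"]) (simp add: erase_append)
qed

lemma bwd_inf:
  assumes r: "inf_run UNIV CRT G Ys l" and t: "inf_trace l (Inf f)"
  shows "\<exists>st l'. inf_run (subterms G) (catr G) G st l' \<and> inf_trace l' (Inf f)"
proof -
  have tr: "(Ys i, l i, Ys (Suc i)) \<in> CRT" for i using r by (simp add: inf_run_def)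
  have nn: "l i \<noteq> None" for i using tr[of i] by auto
  obtain e where sm: "strict_mono e" and rng: "range e = {i. l i \<noteq> None}" and le: "\<And>k. l (e k) = Some (f k)"
    using t unfolding inf_trace_def by auto
  have "surj e" using rng nn by auto
  then have "e k = k" for k using smono_surj_id[OF sm] by blast
  then have lk: "l k = Some (f k)" for k using le by metis
  have S: "step_CR (Ys k) (f k) (Ys (Suc k))" for k using tr[of k] lk[of k] by auto
  show ?thesis
  proof (rule AM[where P = "\<lambda>k X. \<exists>\<sigma>. ctx G \<sigma> X \<and> Ys k = ssubst \<sigma> X"])
    fix k X assume "\<exists>\<sigma>. ctx G \<sigma> X \<and> Ys k = ssubst \<sigma> X"
    then obtain \<sigma> where "ctx G \<sigma> X" "Ys k = ssubst \<sigma> X" by blast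
    then show "\<exists>ps. gpath (catr G) (\<lambda>X. \<exists>\<sigma>. ctx G \<sigma> X \<and> Ys (Suc k) = ssubst \<sigma> X) (f k) X ps"
      using B1[OF wf S] by blast
  next
    have "Ys 0 = G" using r by (simp add: inf_run_def)
    then show "\<exists>\<sigma>. ctx G \<sigma> G \<and> Ys 0 = ssubst \<sigma> G" using ctx.init[OF wf] ssubst_Var[of G] by metis
  next
    fix k X assume "\<exists>\<sigma>. ctx G \<sigma> X \<and> Ys k = ssubst \<sigma> X"
    then show "X \<in> subterms G" using I1[OF wf] by blast
  next
    fix x b y assume "(x, b, y) \<in> catr G"
    then show "y \<in> subterms G" by (rule catr_sub)
  qed
qed

theorem main: "lang (cat G) = lang (lts_CR G)"
  unfolding cat_def lts_CR_def lang_alt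
proof (intro equalityI Un_least)
  show "{Fin (erase ls) |ls. fin_run (subterms G) (catr G) G ls} \<subseteq> {Fin (erase ls) |ls. fin_run UNIV CRT G ls} \<union> {Inf f |f. \<exists>st l. inf_run UNIV CRT G st l \<and> inf_trace l (Inf f)}"
    using fwd_fin R_init by fastforce
  show "{Inf f |f. \<exists>st l. inf_run (subterms G) (catr G) G st l \<and> inf_trace l (Inf f)} \<subseteq> {Fin (erase ls) |ls. fin_run UNIV CRT G ls} \<union> {Inf f |f. \<exists>st l. inf_run UNIV CRT G st l \<and> inf_trace l (Inf f)}"
    using fwd_inf by blast
  show "{Fin (erase ls) |ls. fin_run UNIV CRT G ls} \<subseteq> {Fin (erase ls) |ls. fin_run (subterms G) (catr G) G ls} \<union> {Inf f |f. \<exists>st l. inf_run (subterms G) (catr G) G st l \<and> inf_trace l (Inf f)}"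
    using bwd_fin[OF _ ctx.init[OF wf]] ssubst_Var[of G] by fastforce
  show "{Inf f |f. \<exists>st l. inf_run UNIV CRT G st l \<and> inf_trace l (Inf f)} \<subseteq> {Fin (erase ls) |ls. fin_run (subterms G) (catr G) G ls} \<union> {Inf f |f. \<exists>st l. inf_run (subterms G) (catr G) G st l \<and> inf_trace l (Inf f)}"
    using bwd_inf by blast
qed

end


theorem proposition5p2:
  fixes G :: "('p, 'm, 'v) gty"
  assumes "wf_gty G"
  shows "lang (cat G) = lang (lts_CR G)"
  by (rule main[OF assms])

end
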